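(* Let $a,b,c$ be three points on a circle of radius $1$ with center $o$ in the plane, such that $o$ lies in the (closed) triangle $\triangle abc$. Then the perimeter of $\triangle abc$ is at least $4$. *)

theory Defs
  imports "HOL-Analysis.Analysis"
begin

end

theory Submission
  imports Defs
begin

lemma sq_rel:
  fixes u v w :: "'a::real_inner"
  assumes "norm u = 1" "norm v = 1" "norm w = 1"
    and "al *\<^sub>R u + be *\<^sub>R v + ga *\<^sub>R w = 0"
    and "al \<ge> 0" "be \<ge> 0" "ga \<ge> 0"
  shows "ga^2 = al^2 + be^2 + 2*al*be*(u \<bullet> v)" and "ga \<le> al + be"
proof -
  have e: "ga *\<^sub>R w = -(al *\<^sub>R u + be *\<^sub>R v)"
    using assms(4) by (simp add: algebra_simps eq_neg_iff_add_eq_0)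
  have "ga^2 = norm (ga *\<^sub>R w)^2" using assms by simp
  also have "\<dots> = norm (al *\<^sub>R u + be *\<^sub>R v)^2" using e by (metis norm_minus_cancel)
  also have "\<dots> = (al *\<^sub>R u + be *\<^sub>R v) \<bullet> (al *\<^sub>R u + be *\<^sub>R v)"
    by (simp add: dot_square_norm)
  also have "\<dots> = al^2 * (u \<bullet> u) + be^2 * (v \<bullet> v) + 2*al*be*(u \<bullet> v)"
    by (simp add: inner_add inner_commute power2_eq_square algebra_simps)
  also have "\<dots> = al^2 + be^2 + 2*al*be*(u \<bullet> v)"
    using assms by (simp add: dot_square_norm)
  finally show "ga^2 = al^2 + be^2 + 2*al*be*(u \<bullet> v)" .
  have "ga = norm (ga *\<^sub>R w)" using assms by simp
  also have "\<dots> = norm (al *\<^sub>R u + be *\<^sub>R v)" using e by (metis norm_minus_cancel)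
  also have "\<dots> \<le> norm (al *\<^sub>R u) + norm (be *\<^sub>R v)" by (rule norm_triangle_ineq)
  also have "\<dots> = al + be" using assms by simp
  finally show "ga \<le> al + be" .
qed

lemma zero_case:
  fixes u v w :: "'a::real_inner"
  assumes "norm u = 1" "norm v = 1" "norm w = 1"
    and "al *\<^sub>R u + be *\<^sub>R v = 0"
    and "al \<ge> 0" "be \<ge> 0" "al + be = 1"
  shows "u \<bullet> v + v \<bullet> w + w \<bullet> u \<le> -1"
proof -
  have "al = norm (al *\<^sub>R u)" using assms by simp
  also have "al *\<^sub>R u = - (be *\<^sub>R v)" using assms(4) by (simp add: eq_neg_iff_add_eq_0)
  finally have "al = be" using assms by simp
  then have "al > 0" using assms by simp
  have "al *\<^sub>R (u + v) = 0" using assms(4) \<open>al = be\<close> by (simp add: scaleR_right_distrib)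
  then have "u + v = 0" using \<open>al > 0\<close> by simp
  then have "u = - v" by (simp add: eq_neg_iff_add_eq_0)
  then have "u \<bullet> v = -1" using assms by (simp add: dot_square_norm)
  moreover have "v \<bullet> w + w \<bullet> u = 0" using \<open>u = -v\<close> by (simp add: inner_commute)
  ultimately show ?thesis by simp
qed

lemma key:
  fixes u v w :: "'a::real_inner"
  assumes n: "norm u = 1" "norm v = 1" "norm w = 1"
    and s: "al *\<^sub>R u + be *\<^sub>R v + ga *\<^sub>R w = 0"
    and p: "al \<ge> 0" "be \<ge> 0" "ga \<ge> 0" "al + be + ga = 1"
  shows "u \<bullet> v + v \<bullet> w + w \<bullet> u \<le> -1"
proof (cases "al * be * ga > 0")
  case True
  have s2: "be *\<^sub>R v + ga *\<^sub>R w + al *\<^sub>R u = 0" using s by (simp add: algebra_simps)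
  have s3: "ga *\<^sub>R w + al *\<^sub>R u + be *\<^sub>R v = 0" using s by (simp add: algebra_simps)
  note A = sq_rel[OF n s p(1-3)]
  note B = sq_rel[OF n(2,3,1) s2 p(2,3,1)]
  note C = sq_rel[OF n(3,1,2) s3 p(3,1,2)]
  define x where "x = u \<bullet> v"
  define y where "y = v \<bullet> w"
  define z where "z = w \<bullet> u"
  have prod: "(al + be - ga) * (be + ga - al) * (ga + al - be) \<ge> 0"
    using A(2) B(2) C(2) by (intro mult_nonneg_nonneg) auto
  have "2*al*be*ga*(1+x+y+z) = 2*al*be*ga + ga*(2*al*be*x) + al*(2*be*ga*y) + be*(2*ga*al*z)"
    by (simp add: algebra_simps)
  also have "\<dots> = 2*al*be*ga + ga*(ga^2-al^2-be^2) + al*(al^2-be^2-ga^2) + be*(be^2-ga^2-al^2)"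
  proof -
    have hx: "2*al*be*x = ga^2-al^2-be^2" using A(1) unfolding x_def by linarith
    have hy: "2*be*ga*y = al^2-be^2-ga^2" using B(1) unfolding y_def by linarith
    have hz: "2*ga*al*z = be^2-ga^2-al^2" using C(1) unfolding z_def by linarith
    show ?thesis by (simp only: hx hy hz)
  qed
  also have "\<dots> = - ((al + be - ga) * (be + ga - al) * (ga + al - be))"
    by (simp add: algebra_simps power2_eq_square power3_eq_cube)
  finally have "2*(al*be*ga)*(1+x+y+z) \<le> 0" using prod by (simp add: mult.assoc)
  then have "1+x+y+z \<le> 0" using True
    by (smt (verit, best) mult_pos_pos)
  then show ?thesis unfolding x_def y_def z_def by simp
next
  case False
  then have "al = 0 \<or> be = 0 \<or> ga = 0" using p by (simp add: mult_pos_pos less_le)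
  then show ?thesis
  proof (elim disjE)
    assume "ga = 0"
    then have "al *\<^sub>R u + be *\<^sub>R v = 0" "al + be = 1" using s p(4) by simp_all
    then show ?thesis using zero_case[OF n] p(1,2) by blast
  next
    assume "al = 0"
    then have "u \<bullet> v + v \<bullet> w + w \<bullet> u = v \<bullet> w + w \<bullet> u + u \<bullet> v" by simp
    moreover have "v \<bullet> w + w \<bullet> u + u \<bullet> v \<le> -1"
    proof -
      have "be *\<^sub>R v + ga *\<^sub>R w = 0" "be + ga = 1" using s p(4) \<open>al = 0\<close> by simp_all
      then show ?thesis using zero_case[OF n(2,3,1)] p(2,3) by blast
    qed
    ultimately show ?thesis by linarith
  next
    assume "be = 0"
    then have "u \<bullet> v + v \<bullet> w + w \<bullet> u = w \<bullet> u + u \<bullet> v + v \<bullet> w" by simp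
    moreover have "w \<bullet> u + u \<bullet> v + v \<bullet> w \<le> -1"
    proof -
      have "ga *\<^sub>R w + al *\<^sub>R u = 0" "ga + al = 1" using s p(4) \<open>be = 0\<close> by (simp_all add: add.commute)
      then show ?thesis using zero_case[OF n(3,1,2)] p(3,1) by blast
    qed
    ultimately show ?thesis by linarith
  qed
qed

lemma side:
  fixes u v :: "'a::real_inner"
  assumes "norm u = 1" "norm v = 1"
  shows "norm (u - v) \<ge> 1 - u \<bullet> v"
proof -
  have uu: "u \<bullet> u = 1" "v \<bullet> v = 1" using assms by (simp_all add: dot_square_norm)
  have sq: "norm (u - v)^2 = 2 - 2 * (u \<bullet> v)"
    using uu by (simp add: power2_norm_eq_inner inner_diff inner_commute)
  have "norm (u - v) \<le> norm u + norm v" by (rule norm_triangle_ineq4)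
  then have le2: "norm (u - v) \<le> 2" using assms by simp
  have "norm (u - v)^2 \<le> 2 * norm (u - v)"
    using le2 by (simp add: power2_eq_square mult_right_mono)
  then show ?thesis using sq by simp
qed

theorem lemma1:
  fixes a b c ctr :: "real ^ 2"
  assumes "dist a ctr = 1" and "dist b ctr = 1" and "dist c ctr = 1"
    and "ctr \<in> convex hull {a, b, c}"
  shows "dist a b + dist b c + dist c a \<ge> 4"
proof -
  obtain al be ga where p: "al \<ge> 0" "be \<ge> 0" "ga \<ge> 0" "al + be + ga = 1"
    and e: "ctr = al *\<^sub>R a + be *\<^sub>R b + ga *\<^sub>R c"
    using assms(4) unfolding convex_hull_3 by blast
  define u where "u = a - ctr"
  define v where "v = b - ctr"
  define w where "w = c - ctr"
  have n: "norm u = 1" "norm v = 1" "norm w = 1"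
    using assms unfolding u_def v_def w_def by (simp_all add: dist_norm)
  have "al *\<^sub>R u + be *\<^sub>R v + ga *\<^sub>R w = (al *\<^sub>R a + be *\<^sub>R b + ga *\<^sub>R c) - (al + be + ga) *\<^sub>R ctr"
    unfolding u_def v_def w_def by (simp add: algebra_simps)
  also have "\<dots> = 0" using e p by simp
  finally have s: "al *\<^sub>R u + be *\<^sub>R v + ga *\<^sub>R w = 0" .
  have k: "u \<bullet> v + v \<bullet> w + w \<bullet> u \<le> -1" by (rule key[OF n s p])
  have "dist a b = norm (u - v)" "dist b c = norm (v - w)" "dist c a = norm (w - u)"
    unfolding u_def v_def w_def by (simp_all add: dist_norm)
  moreover have "norm (u - v) \<ge> 1 - u \<bullet> v" "norm (v - w) \<ge> 1 - v \<bullet> w" "norm (w - u) \<ge> 1 - w \<bullet> u"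
    using side n by auto
  ultimately show ?thesis using k by linarith
qed

end
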